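(* Let $q\ge 2$, $n\ge 1$ and $\varepsilon\in\mathbb{N}$ with $\varepsilon\le n$. Let $x\in\mathbb{Z}_q^n$ be a hidden vector, and suppose the attacker has access to an oracle $\texttt{Match}_{x,\varepsilon}$ which, on a query $y\in\mathbb{Z}_q^n$, returns $1$ if $d(x,y)\le\varepsilon$ and $0$ otherwise, and which additionally reveals the value $d(x,y)$ whenever $d(x,y)\le\varepsilon$. Then there is an adaptive query strategy that recovers $x$ using, in the worst case, $\mathcal{O}(q^{n-\varepsilon}+q\varepsilon)$ queries to $\texttt{Match}_{x,\varepsilon}$.
   Context: $\mathbb{Z}_q^n=\{0,\dots,q-1\}^n$ is equipped with the Hamming distance $d(x,y)=|\{i\in\{1,\dots,n\}: x_i\neq y_i\}|$. The attacker may choose each query adaptively based on previous oracle answers; complexity is measured as the number of oracle queries. *)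

theory Defs
  imports Complex_Main
begin

definition vecs :: "nat \<Rightarrow> nat \<Rightarrow> nat list set" where
  "vecs q n = {x. length x = n \<and> (\<forall>i<n. x ! i < q)}"

definition hdist :: "nat list \<Rightarrow> nat list \<Rightarrow> nat" where
  "hdist x y = card {i. i < length x \<and> x ! i \<noteq> y ! i}"

text \<open>Answer of Match_{x,eps} on query y: None encodes 0 (d(x,y) > eps);
  Some d encodes 1 together with the revealed distance d = d(x,y) <= eps.\<close>
definition match_oracle :: "nat list \<Rightarrow> nat \<Rightarrow> nat list \<Rightarrow> nat option" where
  "match_oracle x eps y = (if hdist x y \<le> eps then Some (hdist x y) else None)"

text \<open>Adaptive query strategies as decision trees.\<close>
datatype strategy = Done "nat list" | Query "nat list" "nat option \<Rightarrow> strategy"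

primrec run_output :: "nat list \<Rightarrow> nat \<Rightarrow> strategy \<Rightarrow> nat list" where
  "run_output x eps (Done g) = g"
| "run_output x eps (Query y f) = run_output x eps (f (match_oracle x eps y))"

primrec cost :: "nat list \<Rightarrow> nat \<Rightarrow> strategy \<Rightarrow> nat" where
  "cost x eps (Done g) = 0"
| "cost x eps (Query y f) = Suc (cost x eps (f (match_oracle x eps y)))"

primrec queries_ok :: "nat \<Rightarrow> nat \<Rightarrow> nat list \<Rightarrow> nat \<Rightarrow> strategy \<Rightarrow> bool" where
  "queries_ok q n x eps (Done g) = True"
| "queries_ok q n x eps (Query y f) =
     (y \<in> vecs q n \<and> queries_ok q n x eps (f (match_oracle x eps y)))"

end

theory Submission
  imports Defs
begin

primrec ask :: "nat list list \<Rightarrow> (nat option list \<Rightarrow> strategy) \<Rightarrow> strategy" where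
  "ask [] k = k []"
| "ask (y#ys) k = Query y (\<lambda>a. ask ys (\<lambda>as. k (a#as)))"

lemma ask_run: "run_output x eps (ask ys k) = run_output x eps (k (map (match_oracle x eps) ys))"
  by (induction ys arbitrary: k) auto

lemma ask_cost: "cost x eps (ask ys k) = length ys + cost x eps (k (map (match_oracle x eps) ys))"
  by (induction ys arbitrary: k) auto

lemma ask_ok: "queries_ok q n x eps (ask ys k) = (set ys \<subseteq> vecs q n \<and> queries_ok q n x eps (k (map (match_oracle x eps) ys)))"
  by (induction ys arbitrary: k) auto

definition rk :: "nat \<Rightarrow> nat option \<Rightarrow> nat" where
  "rk eps a = (case a of None \<Rightarrow> Suc eps | Some d \<Rightarrow> d)"

definition pick :: "nat \<Rightarrow> nat \<Rightarrow> nat option list \<Rightarrow> nat" where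
  "pick q eps as = (LEAST v. \<forall>w<q. rk eps (as!v) \<le> rk eps (as!w))"

fun enum :: "nat \<Rightarrow> nat \<Rightarrow> nat list list" where
  "enum q 0 = [[]]"
| "enum q (Suc m) = concat (map (\<lambda>v. map ((#) v) (enum q m)) [0..<q])"

lemma length_enum: "length (enum q m) = q ^ m"
proof (induction m)
  case (Suc m)
  have "length (enum q (Suc m)) = sum_list (map (\<lambda>v. q ^ m) [0..<q])"
    by (simp add: length_concat comp_def Suc)
  also have "\<dots> = q * q ^ m" by (simp add: sum_list_triv)
  finally show ?case by simp
qed simp

lemma enum_complete: "z \<in> vecs q m \<Longrightarrow> z \<in> set (enum q m)"
proof (induction m arbitrary: z)
  case 0 then show ?case by (simp add: vecs_def)
next
  case (Suc m)
  obtain v zs where z: "z = v # zs" using Suc.prems unfolding vecs_def by (cases z) auto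
  have "zs \<in> vecs q m" "v < q" using Suc.prems unfolding z vecs_def by auto
  then show ?case using Suc.IH z by (auto intro!: bexI[of _ v] imageI)
qed

lemma enum_sound: "z \<in> set (enum q m) \<Longrightarrow> z \<in> vecs q m"
proof (induction m arbitrary: z)
  case 0 then show ?case by (simp add: vecs_def)
next
  case (Suc m)
  then obtain v zs where "z = v # zs" "v < q" "zs \<in> set (enum q m)" by auto
  then show ?case using Suc.IH unfolding vecs_def by (auto simp: nth_Cons split: nat.splits)
qed

lemma take_drop_concat:
  assumes "\<forall>l\<in>set L. length l = k" "i < length L"
  shows "take k (drop (i*k) (concat L)) = L ! i"
  using assms
proof (induction L arbitrary: i)
  case Nil then show ?case by simp
next
  case (Cons a L)
  show ?case
  proof (cases i)
    case 0 then show ?thesis using Cons by simp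
  next
    case (Suc j)
    have "drop (i*k) (concat (a#L)) = drop (j*k) (concat L)"
      using Cons.prems Suc by (simp add: add.commute)
    then show ?thesis using Cons Suc by simp
  qed
qed

lemma qm_le: "(q::nat) \<ge> 2 \<Longrightarrow> q * m \<le> q ^ m"
proof (induction m)
  case 0 then show ?case by simp
next
  case (Suc m)
  show ?case
  proof (cases m)
    case 0 then show ?thesis by simp
  next
    case (Suc k)
    have "q ^ Suc m = q * q ^ m" by simp
    have "q * Suc m = q * m + q" by simp
    also have "\<dots> \<le> q ^ m + q" using Suc.IH Suc.prems by simp
    finally have "q * Suc m \<le> q ^ m + q" .
    have "q ^ 1 \<le> q ^ m" using Suc Suc.prems by (intro power_increasing) auto
    then have "q ^ m + q \<le> q ^ m + q ^ m" by simp
    also have "\<dots> \<le> q * q ^ m" using Suc.prems by (metis mult_2 mult_le_mono1)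
    finally show ?thesis using \<open>q * Suc m \<le> q ^ m + q\<close> by simp
  qed
qed

definition strat :: "nat \<Rightarrow> nat \<Rightarrow> nat \<Rightarrow> strategy" where
  "strat q n eps = (let P = map (\<lambda>z. z @ replicate eps 0) (enum q (n - eps)) in
     ask P (\<lambda>as1. let y = (SOME p. \<exists>j<length P. P!j = p \<and> as1!j \<noteq> None);
        Q = concat (map (\<lambda>i. map (\<lambda>v. y[i:=v]) [0..<q]) [0..<n]) in
        ask Q (\<lambda>as2. Done (map (\<lambda>i. pick q eps (take q (drop (i*q) as2))) [0..<n]))))"

lemma hdist_upd:
  assumes "length x = n" "length y = n" "i < n"
  shows "hdist x (y[i:=v]) = card {j. j < n \<and> j \<noteq> i \<and> x!j \<noteq> y!j} + (if v = x!i then 0 else 1)"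
proof -
  let ?B = "{j. j < n \<and> j \<noteq> i \<and> x!j \<noteq> y!j}"
  have eq: "{j. j < length x \<and> x!j \<noteq> y[i:=v]!j} = ?B \<union> (if v = x!i then {} else {i})"
    using assms by (auto simp: nth_list_update)
  have fin: "finite ?B" by simp
  show ?thesis unfolding hdist_def eq using fin by auto
qed

lemma base_le:
  assumes "length x = n" "length y = n"
  shows "card {j. j < n \<and> j \<noteq> i \<and> x!j \<noteq> y!j} \<le> hdist x y"
  unfolding hdist_def using assms by (intro card_mono) auto


lemma rk_upd:
  assumes "length x = n" "length y = n" "hdist x y \<le> eps" "i < n"
  shows "rk eps (match_oracle x eps (y[i:=v])) = card {j. j < n \<and> j \<noteq> i \<and> x!j \<noteq> y!j} + (if v = x!i then 0 else 1)"
proof -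
  have b: "card {j. j < n \<and> j \<noteq> i \<and> x!j \<noteq> y!j} \<le> eps" using base_le[OF assms(1,2)] assms(3) by (meson le_trans)
  show ?thesis using hdist_upd[OF assms(1,2,4), of v] b unfolding rk_def match_oracle_def by auto
qed

lemma pick_correct:
  assumes "x \<in> vecs q n" "y \<in> vecs q n" "hdist x y \<le> eps" "i < n"
  shows "pick q eps (map (\<lambda>v. match_oracle x eps (y[i:=v])) [0..<q]) = x!i"
proof -
  have lx: "length x = n" and ly: "length y = n" and xi: "x!i < q" using assms unfolding vecs_def by auto
  let ?B = "card {j. j < n \<and> j \<noteq> i \<and> x!j \<noteq> y!j}"
  let ?as = "map (\<lambda>v. match_oracle x eps (y[i:=v])) [0..<q]"
  have r: "rk eps (?as!v) = ?B + (if v = x!i then 0 else 1)" if "v < q" for v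
    using that rk_upd[OF lx ly assms(3,4)] by simp
  show ?thesis unfolding pick_def
  proof (rule Least_equality)
    show "\<forall>w<q. rk eps (?as!(x!i)) \<le> rk eps (?as!w)" using r xi by simp
  next
    fix v assume h: "\<forall>w<q. rk eps (?as!v) \<le> rk eps (?as!w)"
    show "x!i \<le> v"
    proof (cases "v < q")
      case True
      then have "rk eps (?as!v) \<le> rk eps (?as!(x!i))" using h xi by blast
      then have "v = x!i" using r[OF True] r[OF xi] by (auto split: if_splits)
      then show ?thesis by simp
    qed (use xi in simp)
  qed
qed

lemma pad_vec: "z \<in> vecs q m \<Longrightarrow> q \<ge> 2 \<Longrightarrow> m + eps = n \<Longrightarrow> z @ replicate eps 0 \<in> vecs q n"
  unfolding vecs_def by (auto simp: nth_append)

lemma pad_dist: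
  assumes "length x = n" "m + eps = n"
  shows "hdist x (take m x @ replicate eps 0) \<le> eps"
proof -
  have "{i. i < length x \<and> x!i \<noteq> (take m x @ replicate eps 0)!i} \<subseteq> {m..<n}"
    using assms by (auto simp: nth_append)
  then have "hdist x (take m x @ replicate eps 0) \<le> card {m..<n}" unfolding hdist_def
    by (intro card_mono) auto
  then show ?thesis using assms by simp
qed

lemma strat_ok:
  assumes q: "q \<ge> 2" and e: "eps \<le> n" and x: "x \<in> vecs q n"
  shows "queries_ok q n x eps (strat q n eps) \<and> run_output x eps (strat q n eps) = x \<and>
         cost x eps (strat q n eps) = q ^ (n - eps) + n * q"
proof -
  define m where "m = n - eps"
  have mn: "m + eps = n" using e m_def by simp
  define P where "P = map (\<lambda>z. z @ replicate eps 0) (enum q m)"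
  define as1 where "as1 = map (match_oracle x eps) P"
  define y where "y = (SOME p. \<exists>j<length P. P!j = p \<and> as1!j \<noteq> None)"
  define Q where "Q = concat (map (\<lambda>i. map (\<lambda>v. y[i:=v]) [0..<q]) [0..<n])"
  define as2 where "as2 = map (match_oracle x eps) Q"
  have lx: "length x = n" using x unfolding vecs_def by simp
  have Pv: "set P \<subseteq> vecs q n" unfolding P_def using pad_vec[OF _ q mn] enum_sound by auto
  have "take m x \<in> vecs q m" using x mn unfolding vecs_def by auto
  then have "take m x \<in> set (enum q m)" by (rule enum_complete)
  then obtain j where j: "j < length (enum q m)" "enum q m ! j = take m x" by (auto simp: in_set_conv_nth)
  have "\<exists>p. \<exists>j<length P. P!j = p \<and> as1!j \<noteq> None"
    using j pad_dist[OF lx mn] unfolding P_def as1_def match_oracle_def by (intro exI[of _ "P!j"]) (auto simp: P_def)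
  then have "\<exists>j<length P. P!j = y \<and> as1!j \<noteq> None" unfolding y_def by (rule someI_ex)
  then obtain k where k: "k < length P" "P!k = y" "as1!k \<noteq> None" by blast
  have yv: "y \<in> vecs q n" using k Pv nth_mem by blast
  have yd: "hdist x y \<le> eps" using k unfolding as1_def match_oracle_def by (auto split: if_splits)
  have ly: "length y = n" using yv unfolding vecs_def by simp
  have Qv: "set Q \<subseteq> vecs q n" unfolding Q_def using yv ly unfolding vecs_def
    by (auto simp: nth_list_update)
  have run: "run_output x eps (strat q n eps) = map (\<lambda>i. pick q eps (take q (drop (i*q) as2))) [0..<n]"
    unfolding strat_def Let_def ask_run P_def as1_def y_def Q_def as2_def m_def by simp
  have ok: "queries_ok q n x eps (strat q n eps) = (set P \<subseteq> vecs q n \<and> set Q \<subseteq> vecs q n)"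
    unfolding strat_def Let_def ask_ok P_def as1_def y_def Q_def as2_def m_def by simp
  have cst: "cost x eps (strat q n eps) = length P + length Q"
    unfolding strat_def Let_def ask_cost P_def as1_def y_def Q_def as2_def m_def by simp
  have lQ: "length Q = n * q" unfolding Q_def by (simp add: length_concat comp_def sum_list_triv)
  have lP: "length P = q ^ m" unfolding P_def by (simp add: length_enum)
  have tk: "take q (drop (i*q) as2) = map (\<lambda>v. match_oracle x eps (y[i:=v])) [0..<q]" if "i < n" for i
  proof -
    have "take q (drop (i*q) as2) = map (match_oracle x eps) (take q (drop (i*q) Q))"
      unfolding as2_def by (simp add: take_map drop_map)
    also have "take q (drop (i*q) Q) = map (\<lambda>v. y[i:=v]) [0..<q]"
      unfolding Q_def using that by (subst take_drop_concat) auto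
    finally show ?thesis by simp
  qed
  have "run_output x eps (strat q n eps) = x"
    unfolding run using tk pick_correct[OF x yv yd] lx by (intro nth_equalityI) auto
  then show ?thesis using ok Pv Qv cst lQ lP m_def by simp
qed

theorem theorem1:
  shows "\<exists>C::real. C > 0 \<and>
    (\<forall>q n eps::nat. q \<ge> 2 \<longrightarrow> n \<ge> 1 \<longrightarrow> eps \<le> n \<longrightarrow>
      (\<exists>s::strategy. \<forall>x \<in> vecs q n.
          queries_ok q n x eps s \<and> run_output x eps s = x \<and>
          real (cost x eps s) \<le> C * (real q ^ (n - eps) + real q * real eps)))"
proof (intro exI[of _ 2] conjI allI impI)
  fix q n eps :: nat
  assume q: "q \<ge> 2" and n: "n \<ge> 1" and e: "eps \<le> n"
  have "q * (n - eps) \<le> q ^ (n - eps)" using qm_le[OF q] .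
  moreover have "n * q = q * (n - eps) + q * eps" using e by (simp add: algebra_simps)
  ultimately have b: "q ^ (n - eps) + n * q \<le> 2 * (q ^ (n - eps) + q * eps)" by simp
  have "real (q ^ (n - eps) + n * q) \<le> real (2 * (q ^ (n - eps) + q * eps))"
    using b by (rule of_nat_mono)
  then have rb: "real (q ^ (n - eps) + n * q) \<le> 2 * (real q ^ (n - eps) + real q * real eps)"
    by simp
  show "\<exists>s::strategy. \<forall>x \<in> vecs q n.
          queries_ok q n x eps s \<and> run_output x eps s = x \<and>
          real (cost x eps s) \<le> 2 * (real q ^ (n - eps) + real q * real eps)"
    using strat_ok[OF q e] rb by (intro exI[of _ "strat q n eps"]) auto
qed (simp)

end
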